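(* Let $n\in\mathbb{Z}\setminus\{0\}$, $r_2\in\mathbb{R}$, $d\in\mathbb{N}$, and let $P\in\mathbb{Z}$ be sufficiently negative (depending on $r_2$). Consider $$S=\sum_{c\in\mathbb{N}} c^{r_2}\sum_{\substack{a,b\in\mathbb{Z}\setminus\{0\}\\ ad-bc=n}} (bc)^{P}.$$ If $d\mid n$, then $$S=(-1)^{P+1}n^{P}\sigma_{r_2}(n)+2\,d^{P}\,\delta_{2\mid P}\,\zeta(-P)\,\zeta(-r_2-P)\prod_{p\mid d}\Big(1+(1-p^{P})\big(p^{r_2}+p^{2r_2}+\cdots+p^{v_p(d)\,r_2}\big)\Big).$$ If $d\nmid n$, then $$S=(-1)^{P+1}n^{P}\sigma_{r_2}(n)+d^{\,r_2+2P}\sum_{\substack{0<c'\le d\\ \gcd(c',d)\mid n}}\frac{\zeta\!\left(-r_2-P,\tfrac{c'}{d}\right)}{\gcd(c',d)^{P}}\sum_{m\in\mathbb{Z}}\big(m+u_{c',d}\big)^{P}.$$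
   Context: For $m\in\mathbb{Z}\setminus\{0\}$ and $\nu\in\mathbb{C}$, $\sigma_\nu(m)=\sum_{e\in\mathbb{N},\,e\mid m}e^{\nu}$. $\zeta$ is the Riemann zeta function and $\zeta(s,a)=\sum_{j\ge0}(j+a)^{-s}$ the Hurwitz zeta function. $\delta_{2\mid P}$ is $1$ if $P$ is even and $0$ otherwise. The product runs over primes $p$ dividing $d$ and $v_p(d)$ is the $p$-adic valuation. For $c,d\in\mathbb{N}$ with $\gcd(c,d)\mid n$: $B=\{b\in\mathbb{Z}:\exists a\in\mathbb{Z},\ ad-bc=n\}$, $b^*$ is an element of $B$ of minimal absolute value, and $u_{c,d}=b^*\gcd(c,d)/d$ (choice of $b^*$ changes $u_{c,d}$ only by an integer, not affecting the sums over $m\in\mathbb{Z}$). *)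

theory Defs
  imports "HOL-Analysis.Analysis" "HOL-Computational_Algebra.Primes"
begin

text \<open>Riemann zeta function as its defining series (used only for real s > 1).\<close>
definition riemann_zeta_real :: "real \<Rightarrow> real" where
  "riemann_zeta_real s = (\<Sum>k. real (Suc k) powr (- s))"

text \<open>Hurwitz zeta function zeta(s,a) = sum_{j>=0} (j+a)^(-s) (used for real s > 1, a > 0).\<close>
definition hurwitz_zeta_real :: "real \<Rightarrow> real \<Rightarrow> real" where
  "hurwitz_zeta_real s a = (\<Sum>j. (real j + a) powr (- s))"

definition divisor_sigma :: "real \<Rightarrow> int \<Rightarrow> real" where
  "divisor_sigma \<nu> m = (\<Sum>e\<in>{e::nat. 0 < e \<and> int e dvd m}. real e powr \<nu>)"

definition Bset :: "nat \<Rightarrow> nat \<Rightarrow> int \<Rightarrow> int set" where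
  "Bset c d n = {b::int. \<exists>a::int. a * int d - b * int c = n}"

definition bstar :: "nat \<Rightarrow> nat \<Rightarrow> int \<Rightarrow> int" where
  "bstar c d n = (SOME b. b \<in> Bset c d n \<and> (\<forall>b'\<in>Bset c d n. \<bar>b\<bar> \<le> \<bar>b'\<bar>))"

definition u_cd :: "nat \<Rightarrow> nat \<Rightarrow> int \<Rightarrow> real" where
  "u_cd c d n = real_of_int (bstar c d n) * real (gcd c d) / real d"

definition inner_pairs :: "nat \<Rightarrow> nat \<Rightarrow> int \<Rightarrow> (int \<times> int) set" where
  "inner_pairs c d n = {(a, b). a \<noteq> 0 \<and> b \<noteq> 0 \<and> a * int d - b * int c = n}"

end

theory Submission
  imports Defs
begin

lemma has_sum_sum_fun:
  fixes f :: "'i \<Rightarrow> 'a \<Rightarrow> real"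
  assumes "finite I" "\<And>i. i \<in> I \<Longrightarrow> (f i has_sum s i) A"
  shows "((\<lambda>x. \<Sum>i\<in>I. f i x) has_sum (\<Sum>i\<in>I. s i)) A"
  using assms
proof (induction I rule: finite_induct)
  case empty then show ?case by simp
next
  case (insert i I)
  then show ?case by (simp add: has_sum_add)
qed

lemma zeta_has_sum:
  assumes "\<sigma> > 1"
  shows "((\<lambda>k::nat. real (Suc k) powr (-\<sigma>)) has_sum riemann_zeta_real \<sigma>) UNIV"
proof -
  have "summable (\<lambda>k::nat. real k powr (-\<sigma>))"
    using assms by (subst summable_real_powr_iff) auto
  then have "summable (\<lambda>k::nat. real (Suc k) powr (-\<sigma>))"
    by (subst summable_Suc_iff)
  then show ?thesis unfolding riemann_zeta_real_def
    by (intro sums_nonneg_imp_has_sum) auto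
qed

lemma hurwitz_has_sum:
  assumes "\<sigma> > 1" "a > 0"
  shows "((\<lambda>j::nat. (real j + a) powr (-\<sigma>)) has_sum hurwitz_zeta_real \<sigma> a) UNIV"
proof -
  have "summable (\<lambda>k::nat. real k powr (-\<sigma>))"
    using assms by (subst summable_real_powr_iff) auto
  then have "summable (\<lambda>j::nat. (real j + a) powr (-\<sigma>))"
  proof (rule summable_comparison_test'[where N=1])
    fix j :: nat assume "j \<ge> 1"
    then show "norm ((real j + a) powr (-\<sigma>)) \<le> real j powr (-\<sigma>)"
      using assms by (auto intro!: powr_mono2')
  qed
  then show ?thesis unfolding hurwitz_zeta_real_def
    by (intro sums_nonneg_imp_has_sum) auto
qed

lemma int_inv_sq_summable: "(\<lambda>m::int. inverse (real_of_int m ^ 2)) summable_on UNIV"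
proof -
  have s: "(\<lambda>n::nat. inverse (real n ^ 2)) summable_on UNIV"
    by (rule summable_nonneg_imp_summable_on) (auto intro: inverse_power_summable)
  have 1: "(\<lambda>m::int. inverse (real_of_int m ^ 2)) summable_on (int ` UNIV)"
    by (subst summable_on_reindex) (use s in \<open>auto simp: o_def\<close>)
  have 2: "(\<lambda>m::int. inverse (real_of_int m ^ 2)) summable_on ((\<lambda>n. - int n) ` UNIV)"
    by (subst summable_on_reindex) (use s in \<open>auto simp: o_def inj_on_def\<close>)
  have "UNIV = int ` UNIV \<union> (\<lambda>n. - int n) ` UNIV"
  proof (rule set_eqI, rule iffI)
    fix m :: int
    show "m \<in> int ` UNIV \<union> (\<lambda>n. - int n) ` UNIV"
    proof (cases "m \<ge> 0")
      case True then have "m = int (nat m)" by simp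
      then show ?thesis by blast
    next
      case False then have "m = - int (nat (-m))" by simp
      then show ?thesis by blast
    qed
  qed simp
  then show ?thesis using summable_on_union[OF 1 2] by simp
qed

lemma shifted_powi_summable:
  fixes u :: real and P :: int
  assumes "P \<le> -2"
  shows "(\<lambda>m::int. (real_of_int m + u) powi P) summable_on UNIV"
proof -
  define N :: int where "N = \<lceil>2 * \<bar>u\<bar>\<rceil> + 2"
  define F where "F = {m::int. \<bar>m\<bar> < N}"
  have finF: "finite F" unfolding F_def
    by (rule finite_subset[of _ "{-N..N}"]) auto
  have "(\<lambda>m::int. norm ((real_of_int m + u) powi P)) summable_on (UNIV - F)"
  proof (rule summable_on_comparison_test)
    show "(\<lambda>m::int. norm (4 * inverse (real_of_int m ^ 2))) summable_on (UNIV - F)"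
      using summable_on_subset[OF summable_on_cmult_right[OF int_inv_sq_summable, of 4]]
      by (subst summable_on_iff_abs_summable_on_real[symmetric]) auto
  next
    fix m assume "m \<in> UNIV - F"
    then have mN: "\<bar>m\<bar> \<ge> N" by (auto simp: F_def)
    have h1: "\<bar>real_of_int m + u\<bar> \<ge> \<bar>real_of_int m\<bar> / 2"
      using mN unfolding N_def by linarith
    have h2: "\<bar>real_of_int m\<bar> / 2 \<ge> 1"
      using mN unfolding N_def by linarith
    have "norm ((real_of_int m + u) powi P) = \<bar>real_of_int m + u\<bar> powi P"
      by (simp add: power_int_abs)
    also have "\<dots> \<le> \<bar>real_of_int m + u\<bar> powi (-2)"
      using h1 h2 assms by (intro power_int_increasing) auto
    also have "\<dots> \<le> (\<bar>real_of_int m\<bar> / 2) powi (-2)"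
      using h1 h2 by (intro power_int_antimono) auto
    also have "\<dots> = norm (4 * inverse (real_of_int m ^ 2))"
      by (simp add: power_int_minus power2_eq_square field_simps)
    finally show "norm ((real_of_int m + u) powi P) \<le> norm (4 * inverse (real_of_int m ^ 2))" .
  qed (rule norm_ge_zero)
  then have a: "(\<lambda>m::int. (real_of_int m + u) powi P) summable_on (UNIV - F)"
    using summable_on_iff_abs_summable_on_real by blast
  have b: "(\<lambda>m::int. (real_of_int m + u) powi P) summable_on F"
    using finF by simp
  show ?thesis using summable_on_Un_disjoint[OF a b] by (simp add: Diff_disjoint Int_commute)
qed

lemma Bset_iff: "b \<in> Bset c d n \<longleftrightarrow> int d dvd (n + b * int c)"
proof
  assume "b \<in> Bset c d n"
  then obtain a where "a * int d - b * int c = n" unfolding Bset_def by blast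
  then have "n + b * int c = int d * a" by (simp add: algebra_simps)
  then show "int d dvd (n + b * int c)" by simp
next
  assume "int d dvd (n + b * int c)"
  then obtain a where "n + b * int c = int d * a" by (auto simp: dvd_def)
  then have "a * int d - b * int c = n" by (simp add: algebra_simps)
  then show "b \<in> Bset c d n" unfolding Bset_def by blast
qed

lemma Bset_mod:
  assumes "c mod d = c' mod d"
  shows "Bset c d n = Bset c' d n"
proof -
  have "int c mod int d = int c' mod int d"
    using assms by (metis of_nat_mod)
  then have "int d dvd int c - int c'" by (simp add: mod_eq_dvd_iff)
  then have *: "int d dvd b * (int c - int c')" for b by simp
  have "int d dvd (n + b * int c) \<longleftrightarrow> int d dvd (n + b * int c')" for b
  proof -
    have eq: "n + b * int c = (n + b * int c') + b * (int c - int c')" by (simp add: algebra_simps)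
    show ?thesis by (subst eq) (rule dvd_add_left_iff[OF *[of b]])
  qed
  then show ?thesis
    by (auto simp: Bset_iff)
qed

lemma Bset_empty:
  assumes "\<not> int (gcd c d) dvd n"
  shows "Bset c d n = {}"
proof (rule ccontr)
  assume "Bset c d n \<noteq> {}"
  then obtain b where "int d dvd (n + b * int c)" by (auto simp: Bset_iff)
  moreover have "int (gcd c d) dvd int d" "int (gcd c d) dvd b * int c"
    by auto
  ultimately have "int (gcd c d) dvd (n + b * int c) - b * int c"
    by (meson dvd_diff dvd_trans)
  then show False using assms by simp
qed

lemma Bset_nonempty:
  assumes "int (gcd c d) dvd n"
  shows "\<exists>b. b \<in> Bset c d n"
proof -
  obtain x y where xy: "x * int d + y * int c = int (gcd c d)"
    using bezout_int[of "int d" "int c"] by (auto simp: gcd.commute)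
  obtain k where k: "n = int (gcd c d) * k" using assms by auto
  have "(x * k) * int d - (- y * k) * int c = (x * int d + y * int c) * k"
    by (simp add: algebra_simps)
  also have "\<dots> = n" using xy k by simp
  finally have "(x * k) * int d - (- y * k) * int c = n" .
  then show ?thesis unfolding Bset_def by blast
qed

lemma Bset_struct:
  assumes "0 < d" "b0 \<in> Bset c d n"
  defines "q \<equiv> int d div int (gcd c d)"
  shows "Bset c d n = (\<lambda>k. b0 + k * q) ` UNIV"
proof -
  define G where "G = int (gcd c d)"
  have G0: "G > 0" using assms by (simp add: G_def)
  have dG: "int d = G * q" unfolding q_def G_def by simp
  obtain c1 where cG: "int c = G * c1" unfolding G_def
    by (metis dvd_def gcd_dvd1 of_nat_dvd_iff)
  have cop: "coprime q c1"
  proof -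
    have "coprime (int d div gcd (int d) (int c)) (int c div gcd (int d) (int c))"
      using assms by (intro div_gcd_coprime) auto
    moreover have "gcd (int d) (int c) = G" unfolding G_def by (simp add: gcd.commute)
    moreover have "int c div G = c1" using cG G0 by simp
    ultimately show ?thesis unfolding q_def G_def by simp
  qed
  have key: "int d dvd x * int c \<longleftrightarrow> q dvd x" for x
  proof -
    have "int d dvd x * int c \<longleftrightarrow> G * q dvd G * (x * c1)"
      by (simp add: dG cG algebra_simps)
    also have "\<dots> \<longleftrightarrow> q dvd x * c1" using G0 by simp
    also have "\<dots> \<longleftrightarrow> q dvd x" using cop by (simp add: coprime_dvd_mult_left_iff)
    finally show ?thesis .
  qed
  have b0: "int d dvd n + b0 * int c" using assms by (simp add: Bset_iff)
  show ?thesis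
  proof (rule set_eqI)
    fix b
    have "b \<in> Bset c d n \<longleftrightarrow> int d dvd (b - b0) * int c"
    proof -
      have eq: "n + b * int c = (n + b0 * int c) + (b - b0) * int c" by (simp add: algebra_simps)
      show ?thesis unfolding Bset_iff by (subst eq) (rule dvd_add_right_iff[OF b0])
    qed
    also have "\<dots> \<longleftrightarrow> q dvd (b - b0)" by (rule key)
    also have "\<dots> \<longleftrightarrow> b \<in> (\<lambda>k. b0 + k * q) ` UNIV"
    proof
      assume "q dvd (b - b0)"
      then obtain k where "b - b0 = q * k" by (auto simp: dvd_def)
      then have "b = b0 + k * q" by (simp add: algebra_simps)
      then show "b \<in> (\<lambda>k. b0 + k * q) ` UNIV" by blast
    next
      assume "b \<in> (\<lambda>k. b0 + k * q) ` UNIV"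
      then obtain k where "b = b0 + k * q" by blast
      then show "q dvd (b - b0)" by simp
    qed
    finally show "b \<in> Bset c d n \<longleftrightarrow> b \<in> (\<lambda>k. b0 + k * q) ` UNIV" .
  qed
qed

lemma bstar_in:
  assumes "int (gcd c d) dvd n"
  shows "bstar c d n \<in> Bset c d n"
proof -
  let ?B = "Bset c d n"
  obtain b1 where b1: "b1 \<in> ?B" using Bset_nonempty[OF assms] by blast
  define Q where "Q = (\<lambda>k::nat. \<exists>b\<in>?B. nat \<bar>b\<bar> = k)"
  have "Q (nat \<bar>b1\<bar>)" using b1 Q_def by blast
  then have "Q (LEAST k. Q k)" by (rule LeastI)
  then obtain b where b: "b \<in> ?B" "nat \<bar>b\<bar> = (LEAST k. Q k)" unfolding Q_def by blast
  have "\<forall>b'\<in>?B. \<bar>b\<bar> \<le> \<bar>b'\<bar>"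
  proof
    fix b' assume "b' \<in> ?B"
    then have "Q (nat \<bar>b'\<bar>)" unfolding Q_def by blast
    then have "(LEAST k. Q k) \<le> nat \<bar>b'\<bar>" by (rule Least_le)
    then show "\<bar>b\<bar> \<le> \<bar>b'\<bar>" using b by simp
  qed
  then have "\<exists>b. b \<in> ?B \<and> (\<forall>b'\<in>?B. \<bar>b\<bar> \<le> \<bar>b'\<bar>)" using b by blast
  then show ?thesis unfolding bstar_def by (rule someI_ex[where P="\<lambda>b. b \<in> ?B \<and> (\<forall>b'\<in>?B. \<bar>b\<bar> \<le> \<bar>b'\<bar>)", THEN conjunct1])
qed

lemma q_pos:
  assumes "0 < d"
  shows "int d div int (gcd c d) > 0"
proof -
  have g: "gcd c d > 0" "gcd c d dvd d" using assms by auto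
  then have "gcd c d \<le> d" using assms by (simp add: dvd_imp_le)
  then have "d div gcd c d > 0" using g by (simp add: div_greater_zero_iff)
  then show ?thesis by (metis of_nat_0_less_iff zdiv_int)
qed

lemma q_real:
  "real_of_int (int d div int (gcd c d)) = real d / real (gcd c d)"
  by (subst of_int_div) auto

lemma K_has_sum:
  assumes "0 < d" "b0 \<in> Bset c d n" "P \<le> -2"
  defines "q \<equiv> int d div int (gcd c d)"
  shows "((\<lambda>b. real_of_int b powi P) has_sum
     (real_of_int q powi P * (\<Sum>\<^sub>\<infinity>m::int. (real_of_int m + real_of_int b0 / real_of_int q) powi P)))
     (Bset c d n)"
proof -
  have q0: "q > 0" unfolding q_def using q_pos[OF assms(1)] .
  have B: "Bset c d n = (\<lambda>k. b0 + k * q) ` UNIV"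
    using Bset_struct[OF assms(1,2)] unfolding q_def by simp
  have inj: "inj_on (\<lambda>k. b0 + k * q) UNIV"
    using q0 by (auto simp: inj_on_def)
  define u where "u = real_of_int b0 / real_of_int q"
  have S: "(\<lambda>m::int. (real_of_int m + u) powi P) summable_on UNIV"
    using shifted_powi_summable assms(3) by blast
  have "((\<lambda>m::int. real_of_int q powi P * (real_of_int m + u) powi P) has_sum
          (real_of_int q powi P * (\<Sum>\<^sub>\<infinity>m::int. (real_of_int m + u) powi P))) UNIV"
    by (rule has_sum_cmult_right) (use S in simp)
  moreover have "real_of_int q powi P * (real_of_int m + u) powi P
      = real_of_int (b0 + m * q) powi P" for m
  proof -
    have "real_of_int (b0 + m * q) = real_of_int q * (real_of_int m + u)"
      using q0 unfolding u_def by (simp add: field_simps)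
    then show ?thesis by (simp add: power_int_mult_distrib)
  qed
  ultimately have "((\<lambda>b. real_of_int b powi P) \<circ> (\<lambda>k. b0 + k * q) has_sum
          (real_of_int q powi P * (\<Sum>\<^sub>\<infinity>m::int. (real_of_int m + u) powi P))) UNIV"
    by (simp add: o_def)
  then show ?thesis unfolding B u_def by (subst has_sum_reindex[OF inj])
qed

lemma has_sum_Diff_sub:
  fixes f :: "'a \<Rightarrow> real"
  assumes "(f has_sum a) A" "(f has_sum b) B" "B \<subseteq> A"
  shows "(f has_sum (a - b)) (A - B)"
proof -
  have "f summable_on (A - B)"
    using assms(1) by (rule summable_on_subset[OF has_sum_imp_summable]) auto
  then obtain s where s: "(f has_sum s) (A - B)" by (auto simp: summable_on_def)
  have "(f has_sum (s + b)) ((A - B) \<union> B)"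
    by (rule has_sum_Un_disjoint[OF s assms(2)]) auto
  moreover have "(A - B) \<union> B = A" using assms(3) by auto
  ultimately have "s + b = a" using assms(1) has_sum_unique by metis
  then have "s = a - b" by simp
  then show ?thesis using s by simp
qed

lemma inner_has_sum:
  assumes c0: "0 < c" and d0: "0 < d" and P0: "P < 0"
    and K: "((\<lambda>b. real_of_int b powi P) has_sum K) (Bset c d n)"
  shows "((\<lambda>(a, b). real_of_int (b * int c) powi P) has_sum
     (real c powi P * K - (if int c dvd n then real_of_int (- n) powi P else 0))) (inner_pairs c d n)"
proof -
  let ?f = "\<lambda>b. real_of_int (b * int c) powi P"
  let ?B = "Bset c d n"
  have h1: "(?f has_sum (real c powi P * K)) ?B"
    using has_sum_cmult_right[OF K, of "real c powi P"]
    by (simp add: power_int_mult_distrib mult.commute)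
  define Z where "Z = {b \<in> ?B. n + b * int c = 0}"
  define z where "z = (if int c dvd n then real_of_int (- n) powi P else 0)"
  have h2: "(?f has_sum z) Z"
  proof (cases "int c dvd n")
    case True
    then obtain k where k: "n = int c * k" by (auto simp: dvd_def)
    have "Z = {-k}"
    proof -
      have "n + b * int c = 0 \<longleftrightarrow> b = -k" for b
      proof -
        have "n + b * int c = 0 \<longleftrightarrow> (b + k) * int c = 0" by (simp add: k algebra_simps)
        also have "\<dots> \<longleftrightarrow> b + k = 0" using c0 by simp
        finally show ?thesis by linarith
      qed
      moreover have "-k \<in> ?B" using k by (simp add: Bset_iff algebra_simps)
      ultimately show ?thesis unfolding Z_def by auto
    qed
    then show ?thesis using True k unfolding z_def by (simp add: has_sum_finite_iff mult.commute)
  next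
    case False
    have "Z = {}"
    proof -
      have "n + b * int c \<noteq> 0" for b
      proof
        assume "n + b * int c = 0"
        then have "n = int c * (- b)" by (simp add: algebra_simps)
        then show False using False by simp
      qed
      then show ?thesis unfolding Z_def by auto
    qed
    then show ?thesis using False unfolding z_def by simp
  qed
  have h3: "(?f has_sum (real c powi P * K - z)) (?B - Z)"
    by (rule has_sum_Diff_sub[OF h1 h2]) (auto simp: Z_def)
  define S' where "S' = {b \<in> ?B. b \<noteq> 0 \<and> n + b * int c \<noteq> 0}"
  have h4: "(?f has_sum (real c powi P * K - z)) S'"
  proof -
    have "(?f has_sum (real c powi P * K - z)) (?B - Z) \<longleftrightarrow> (?f has_sum (real c powi P * K - z)) S'"
      by (rule has_sum_cong_neutral) (use P0 in \<open>auto simp: S'_def Z_def\<close>)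
    then show ?thesis using h3 by simp
  qed
  have im: "snd ` inner_pairs c d n = S'"
  proof (rule set_eqI, rule iffI)
    fix b assume "b \<in> snd ` inner_pairs c d n"
    then obtain a where a: "a \<noteq> 0" "b \<noteq> 0" "a * int d - b * int c = n"
      by (auto simp: inner_pairs_def)
    then have e: "n + b * int c = a * int d" by (simp add: algebra_simps)
    have "a * int d \<noteq> 0" using a d0 by simp
    then have "n + b * int c \<noteq> 0" unfolding e .
    moreover have "b \<in> ?B" using a unfolding Bset_def by blast
    ultimately show "b \<in> S'" using a unfolding S'_def by blast
  next
    fix b assume "b \<in> S'"
    then obtain a where a: "a * int d - b * int c = n" "b \<noteq> 0" "n + b * int c \<noteq> 0"
      by (auto simp: S'_def Bset_def)
    then have "a \<noteq> 0" by (auto simp: algebra_simps)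
    then have "(a, b) \<in> inner_pairs c d n" using a by (simp add: inner_pairs_def)
    then show "b \<in> snd ` inner_pairs c d n" by force
  qed
  have inj: "inj_on snd (inner_pairs c d n)"
  proof (rule inj_onI)
    fix x y assume "x \<in> inner_pairs c d n" "y \<in> inner_pairs c d n" "snd x = snd y"
    then show "x = y" using d0 by (auto simp: inner_pairs_def)
  qed
  have "((?f \<circ> snd) has_sum (real c powi P * K - z)) (inner_pairs c d n)"
    using h4 unfolding im[symmetric] by (subst (asm) has_sum_reindex[OF inj])
  moreover have "(\<lambda>(a, b). real_of_int (b * int c) powi P) = ?f \<circ> snd" by auto
  ultimately show ?thesis unfolding z_def by metis
qed

lemma H0_has_sum:
  assumes "P \<le> -2"
  shows "((\<lambda>m::int. real_of_int m powi P) has_sum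
           (2 * (if even P then 1 else 0) * riemann_zeta_real (real_of_int (- P)))) UNIV"
proof -
  define Z where "Z = riemann_zeta_real (real_of_int (- P))"
  have z: "((\<lambda>k::nat. real (Suc k) powr (- real_of_int (- P))) has_sum Z) UNIV"
    unfolding Z_def using assms by (intro zeta_has_sum) auto
  have eqk: "real (Suc k) powr (- real_of_int (- P)) = real (Suc k) powi P" for k
    by (subst powr_real_of_int'[symmetric]) auto
  have pos: "((\<lambda>k::nat. real_of_int (int (Suc k)) powi P) has_sum Z) UNIV"
    using z unfolding eqk by simp
  have neg: "((\<lambda>k::nat. real_of_int (- int (Suc k)) powi P) has_sum
               ((if even P then 1 else -1) * Z)) UNIV"
  proof -
    have "real_of_int (- int (Suc k)) powi P = (if even P then 1 else -1) * real_of_int (int (Suc k)) powi P" for k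
      by (cases "even P") (simp_all del: of_nat_Suc)
    then show ?thesis using has_sum_cmult_right[OF pos, of "if even P then 1 else -1"] by simp
  qed
  have inj1: "inj (\<lambda>k::nat. int (Suc k))" by (auto simp: inj_on_def)
  have inj2: "inj (\<lambda>k::nat. - int (Suc k))" by (auto simp: inj_on_def)
  have A1: "((\<lambda>m::int. real_of_int m powi P) has_sum Z) (range (\<lambda>k::nat. int (Suc k)))"
    by (subst has_sum_reindex[OF inj1]) (use pos in \<open>simp add: o_def\<close>)
  have A2: "((\<lambda>m::int. real_of_int m powi P) has_sum ((if even P then 1 else -1) * Z)) (range (\<lambda>k::nat. - int (Suc k)))"
    by (subst has_sum_reindex[OF inj2]) (use neg in \<open>simp add: o_def\<close>)
  have A3: "((\<lambda>m::int. real_of_int m powi P) has_sum 0) {0}"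
    using assms by (simp add: has_sum_finite_iff)
  have U: "UNIV = ({0} \<union> range (\<lambda>k::nat. int (Suc k))) \<union> range (\<lambda>k::nat. - int (Suc k))"
  proof (rule set_eqI, rule iffI)
    fix m :: int
    show "m \<in> ({0} \<union> range (\<lambda>k::nat. int (Suc k))) \<union> range (\<lambda>k::nat. - int (Suc k))"
    proof (cases "m > 0")
      case True then have "m = int (Suc (nat (m - 1)))" by simp
      then show ?thesis by blast
    next
      case False
      show ?thesis
      proof (cases "m = 0")
        case True then show ?thesis by simp
      next
        case F2: False
        with False have "m = - int (Suc (nat (- m - 1)))" by simp
        then show ?thesis by blast
      qed
    qed
  qed simp
  have "((\<lambda>m::int. real_of_int m powi P) has_sum (0 + Z + (if even P then 1 else -1) * Z))
          (({0} \<union> range (\<lambda>k::nat. int (Suc k))) \<union> range (\<lambda>k::nat. - int (Suc k)))"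
    by (intro has_sum_Un_disjoint A1 A2 A3) auto
  then show ?thesis unfolding U[symmetric] Z_def by (cases "even P") simp_all
qed

lemma periodic_has_sum:
  fixes K :: "nat \<Rightarrow> real"
  assumes d0: "0 < d" and s: "s < -1"
    and per: "\<And>c c'. c mod d = c' mod d \<Longrightarrow> K c = K c'"
  shows "((\<lambda>c::nat. real c powr s * K c) has_sum
           (\<Sum>c'\<in>{1..d}. K c' * (real d powr s * hurwitz_zeta_real (-s) (real c' / real d)))) {1..}"
proof -
  define B where "B = (\<lambda>c'::nat. range (\<lambda>j::nat. c' + j * d))"
  have part: "(\<Union>c'\<in>{1..d}. B c') = {1..}"
  proof (rule set_eqI, rule iffI)
    fix c assume "c \<in> (\<Union>c'\<in>{1..d}. B c')"
    then show "c \<in> {1..}" by (auto simp: B_def)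
  next
    fix c :: nat assume "c \<in> {1..}"
    then have c1: "c \<ge> 1" by simp
    define c' where "c' = (c - 1) mod d + 1"
    define j where "j = (c - 1) div d"
    have "c = c' + j * d" unfolding c'_def j_def using c1
      by (metis add.commute le_add_diff_inverse mod_div_mult_eq add.left_commute)
    moreover have "c' \<in> {1..d}" unfolding c'_def using d0
      by (simp add: Suc_leI)
    ultimately show "c \<in> (\<Union>c'\<in>{1..d}. B c')" unfolding B_def by blast
  qed
  have disj: "B c1 \<inter> B c2 = {}" if "c1 \<in> {1..d}" "c2 \<in> {1..d}" "c1 \<noteq> c2" for c1 c2
  proof (rule ccontr)
    assume "B c1 \<inter> B c2 \<noteq> {}"
    then obtain j1 j2 where e: "c1 + j1 * d = c2 + j2 * d" unfolding B_def by auto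
    have "(c1 - 1 + j1 * d) mod d = (c2 - 1 + j2 * d) mod d"
      using e that by (metis Nat.add_diff_assoc2 atLeastAtMost_iff)
    moreover have "c1 - 1 < d" "c2 - 1 < d" using that by auto
    ultimately have "c1 - 1 = c2 - 1" by simp
    then show False using that by auto
  qed
  have each: "((\<lambda>c::nat. real c powr s * K c) has_sum
           (K c' * (real d powr s * hurwitz_zeta_real (-s) (real c' / real d)))) (B c')"
    if c': "c' \<in> {1..d}" for c'
  proof -
    have inj: "inj (\<lambda>j::nat. c' + j * d)" using d0 by (auto simp: inj_on_def)
    have hz: "((\<lambda>j::nat. (real j + real c' / real d) powr (- (- s))) has_sum hurwitz_zeta_real (-s) (real c' / real d)) UNIV"
      using c' d0 s by (intro hurwitz_has_sum) auto
    have "((\<lambda>j::nat. K c' * (real d powr s * (real j + real c' / real d) powr s)) has_sum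
            (K c' * (real d powr s * hurwitz_zeta_real (-s) (real c' / real d)))) UNIV"
      by (intro has_sum_cmult_right) (use hz in simp)
    moreover have "K c' * (real d powr s * (real j + real c' / real d) powr s)
                 = real (c' + j * d) powr s * K (c' + j * d)" for j
    proof -
      have "K (c' + j * d) = K c'" by (rule per) simp
      moreover have "real (c' + j * d) = real d * (real j + real c' / real d)"
        using d0 by (simp add: field_simps)
      ultimately show ?thesis using d0 by (simp add: powr_mult)
    qed
    ultimately have "(((\<lambda>c::nat. real c powr s * K c) \<circ> (\<lambda>j. c' + j * d)) has_sum
           (K c' * (real d powr s * hurwitz_zeta_real (-s) (real c' / real d)))) UNIV"
      by (simp add: o_def)
    then show ?thesis unfolding B_def by (subst has_sum_reindex[OF inj])
  qed
  have "((\<lambda>c::nat. real c powr s * K c) has_sum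
           (\<Sum>c'\<in>{1..d}. K c' * (real d powr s * hurwitz_zeta_real (-s) (real c' / real d))))
           (\<Union>c'\<in>{1..d}. B c')"
    by (rule sum_has_sum) (use each disj in auto)
  then show ?thesis unfolding part .
qed

lemma gcd_coprime_mult:
  fixes a b c :: nat
  assumes "coprime a b"
  shows "gcd c (a * b) = gcd c a * gcd c b"
proof (rule dvd_antisym)
  have "gcd c (a * b) dvd a * b" by simp
  then obtain x y where xy: "gcd c (a * b) = x * y" "x dvd a" "y dvd b" by (rule dvd_productE)
  have xyc: "x * y dvd c" unfolding xy(1)[symmetric] by simp
  have "x dvd c" using xyc by (rule dvd_mult_left)
  have "y dvd c" using xyc by (rule dvd_mult_right)
  have "x dvd gcd c a" "y dvd gcd c b" using xy \<open>x dvd c\<close> \<open>y dvd c\<close> by auto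
  then show "gcd c (a * b) dvd gcd c a * gcd c b" using xy by (simp add: mult_dvd_mono)
next
  have co: "coprime (gcd c a) (gcd c b)"
    by (rule coprime_divisors[OF gcd_dvd2 gcd_dvd2 assms])
  have "gcd c a dvd gcd c (a * b)" "gcd c b dvd gcd c (a * b)" by auto
  then show "gcd c a * gcd c b dvd gcd c (a * b)" using co by (rule divides_mult)
qed

lemma real_pow_powr:
  assumes "0 < x"
  shows "(x ^ n) powr y = x powr (real n * y)"
  using assms by (simp add: powr_realpow[symmetric] powr_powr)

definition delta_w :: "real \<Rightarrow> real \<Rightarrow> nat \<Rightarrow> real" where
  "delta_w p t i = (if i = 0 then 1 else p powr (t * real i) - p powr (t * real (i - 1)))"

lemma delta_w_telescope:
  assumes "0 < p"
  shows "(\<Sum>i=0..j. delta_w p t i) = p powr (t * real j)"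
  using assms by (induction j) (auto simp: delta_w_def)

lemma gcd_prime_power_expand:
  fixes p c e :: nat
  assumes p: "prime p" and c: "0 < c"
  shows "real (gcd c (p ^ e)) powr t = (\<Sum>i=0..e. delta_w (real p) t i * (if p ^ i dvd c then 1 else 0))"
proof -
  have "gcd c (p ^ e) dvd p ^ e" by simp
  then obtain j where j: "j \<le> e" "gcd c (p ^ e) = p ^ j" using divides_primepow_nat[OF p] by blast
  have p2: "2 \<le> p" using p by (simp add: prime_ge_2_nat)
  have iff: "p ^ i dvd c \<longleftrightarrow> i \<le> j" if "i \<le> e" for i
  proof -
    have "p ^ i dvd p ^ e" using that by (simp add: le_imp_power_dvd)
    then have "p ^ i dvd c \<longleftrightarrow> p ^ i dvd gcd c (p ^ e)" by simp
    also have "\<dots> \<longleftrightarrow> i \<le> j" unfolding j(2) using p2 by (rule dvd_power_iff_le)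
    finally show ?thesis .
  qed
  have "(\<Sum>i=0..e. delta_w (real p) t i * (if p ^ i dvd c then 1 else 0))
        = (\<Sum>i=0..e. if i \<le> j then delta_w (real p) t i else 0)"
    by (rule sum.cong) (auto simp: iff)
  also have "\<dots> = (\<Sum>i\<in>{0..e} \<inter> {i. i \<le> j}. delta_w (real p) t i)"
    by (simp add: sum.inter_restrict)
  also have "{0..e} \<inter> {i. i \<le> j} = {0..j}" using j by auto
  also have "(\<Sum>i=0..j. delta_w (real p) t i) = real p powr (t * real j)"
    using p2 by (intro delta_w_telescope) auto
  also have "\<dots> = real (gcd c (p ^ e)) powr t"
    unfolding j(2) using p2 by (simp add: real_pow_powr mult.commute)
  finally show ?thesis ..
qed

lemma delta_w_sum:
  assumes "0 < p"
  shows "(\<Sum>i=0..e. delta_w p t i * (p ^ i) powr s)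
       = 1 + (1 - p powr (-t)) * (\<Sum>k=1..e. p powr (real k * (s + t)))"
proof -
  have "(\<Sum>i=0..e. delta_w p t i * (p ^ i) powr s)
      = delta_w p t 0 * (p ^ 0) powr s + (\<Sum>i=1..e. delta_w p t i * (p ^ i) powr s)"
    by (simp add: sum.atLeast_Suc_atMost)
  also have "delta_w p t 0 * (p ^ 0) powr s = 1" by (simp add: delta_w_def)
  also have "(\<Sum>i=1..e. delta_w p t i * (p ^ i) powr s)
           = (\<Sum>k=1..e. (1 - p powr (-t)) * p powr (real k * (s + t)))"
  proof (rule sum.cong)
    fix i assume "i \<in> {1..e}"
    then have i: "i \<ge> 1" by simp
    have "delta_w p t i * (p ^ i) powr s
        = (p powr (t * real i) - p powr (t * real (i - 1))) * p powr (real i * s)"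
      using i assms by (simp add: delta_w_def real_pow_powr)
    also have "\<dots> = p powr (t * real i + real i * s) - p powr (t * real (i - 1) + real i * s)"
      by (simp add: powr_add algebra_simps)
    also have "t * real (i - 1) + real i * s = real i * (s + t) + (- t)"
      using i by (simp add: of_nat_diff algebra_simps)
    also have "t * real i + real i * s = real i * (s + t)" by (simp add: algebra_simps)
    also have "p powr (real i * (s + t)) - p powr (real i * (s + t) + - t)
             = (1 - p powr (-t)) * p powr (real i * (s + t))"
      unfolding powr_add[of p "real i * (s + t)" "- t"] by (simp add: algebra_simps)
    finally show "delta_w p t i * (p ^ i) powr s = (1 - p powr (-t)) * p powr (real i * (s + t))" .
  qed simp
  also have "\<dots> = (1 - p powr (-t)) * (\<Sum>k=1..e. p powr (real k * (s + t)))"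
    by (simp add: sum_distrib_left)
  finally show ?thesis by simp
qed

lemma pf_decomp:
  fixes p d :: nat
  assumes p: "prime p" and pd: "p dvd d" and d0: "0 < d"
  defines "e \<equiv> multiplicity p d"
  defines "m \<equiv> d div p ^ e"
  shows "d = p ^ e * m" "\<not> p dvd m" "0 < m" "1 \<le> e" "m < d"
    "prime_factors d = insert p (prime_factors m)" "p \<notin> prime_factors m"
    "\<And>q. q \<in> prime_factors m \<Longrightarrow> multiplicity q d = multiplicity q m"
proof -
  show dm: "d = p ^ e * m" unfolding m_def e_def using multiplicity_dvd[of p d] by simp
  have d00: "d \<noteq> 0" using d0 by simp
  have nu: "\<not> is_unit p" using p by auto
  show npm: "\<not> p dvd m" unfolding m_def e_def using d00 nu by (rule multiplicity_decompose)
  show m0: "0 < m" using dm d0 by (cases m) auto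
  have pe: "prime_elem p" using p by simp
  have "d \<noteq> 0" using d0 by simp
  then have "multiplicity p d > 0" using prime_multiplicity_gt_zero_iff[OF pe] pd by blast
  then show e1: "1 \<le> e" unfolding e_def by simp
  have p2: "2 \<le> p" using p by (simp add: prime_ge_2_nat)
  have "p ^ 1 \<le> p ^ e" using e1 p2 by (intro power_increasing) auto
  then have "2 \<le> p ^ e" using p2 by simp
  then show "m < d" using m0 dm by (metis less_le_trans mult_less_cancel2 nat_mult_1 one_less_numeral_iff semiring_norm(76) le_refl)
  show "p \<notin> prime_factors m" using npm by auto
  show "prime_factors d = insert p (prime_factors m)"
  proof -
    have "prime_factors d = prime_factors (p ^ e) \<union> prime_factors m"
      unfolding dm using p m0 by (intro prime_factors_product) auto
    moreover have "prime_factors (p ^ e) = {p}"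
    proof -
      have "p ^ e \<noteq> 0" using p by simp
      then have "prime_factors (p ^ e) = {q. prime q \<and> q dvd p ^ e}" by (rule prime_factors_dvd)
      also have "\<dots> = {p}" using p e1
        by (auto dest: prime_dvd_power primes_dvd_imp_eq intro: dvd_power)
      finally show ?thesis .
    qed
    ultimately show ?thesis by auto
  qed
  show "multiplicity q d = multiplicity q m" if q: "q \<in> prime_factors m" for q
  proof -
    have qp: "q \<noteq> p" using q npm by auto
    have qprime: "prime q" using q by auto
    have "multiplicity q d = multiplicity q (p ^ e) + multiplicity q m"
      unfolding dm using qprime p m0 by (intro prime_elem_multiplicity_mult_distrib) auto
    moreover have "multiplicity q (p ^ e) = 0"
      using qprime p qp by (rule multiplicity_distinct_prime_power)
    ultimately show ?thesis by simp
  qed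
qed

lemma zeta_from1:
  assumes "s < -1"
  shows "((\<lambda>c::nat. real c powr s) has_sum riemann_zeta_real (-s)) {1..}"
proof -
  have z: "((\<lambda>k::nat. real (Suc k) powr (- (- s))) has_sum riemann_zeta_real (-s)) UNIV"
    using assms by (intro zeta_has_sum) auto
  have inj: "inj Suc" by simp
  have r: "range Suc = {1::nat..}" by (auto simp: image_iff Suc_le_eq gr0_conv_Suc)
  have "((\<lambda>c::nat. real c powr s) has_sum riemann_zeta_real (-s)) (range Suc)"
    by (subst has_sum_reindex[OF inj]) (use z in \<open>simp add: o_def\<close>)
  then show ?thesis unfolding r .
qed

definition euler_fac :: "real \<Rightarrow> real \<Rightarrow> nat \<Rightarrow> nat \<Rightarrow> real" where
  "euler_fac s t p e = 1 + (1 - real p powr (-t)) * (\<Sum>k=1..e. real p powr (real k * (s + t)))"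

lemma gcd_series:
  fixes s t :: real
  assumes s: "s < -1"
  shows "0 < d \<Longrightarrow> ((\<lambda>c::nat. real c powr s * real (gcd c d) powr t) has_sum
     (riemann_zeta_real (-s) * (\<Prod>p\<in>prime_factors d. euler_fac s t p (multiplicity p d)))) {1..}"
proof (induction d rule: less_induct)
  case (less d)
  show ?case
  proof (cases "d = 1")
    case True
    then show ?thesis using zeta_from1[OF s] by simp
  next
    case False
    obtain p where p: "prime p" "p dvd d" using prime_factor_nat[OF False] by blast
    define e where "e = multiplicity p d"
    define m where "m = d div p ^ e"
    note D = pf_decomp[OF p less.prems, folded e_def, folded m_def]
    define Gm where "Gm = riemann_zeta_real (-s) * (\<Prod>q\<in>prime_factors m. euler_fac s t q (multiplicity q m))"
    have IH: "((\<lambda>c::nat. real c powr s * real (gcd c m) powr t) has_sum Gm) {1..}"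
      unfolding Gm_def using D(3,5) by (intro less.IH) auto
    have copi: "coprime m (p ^ i)" for i
      using p D(2) by (metis prime_imp_power_coprime_nat)
    have expand: "real c powr s * real (gcd c d) powr t
        = (\<Sum>i=0..e. delta_w (real p) t i * (real c powr s * real (gcd c m) powr t * (if p ^ i dvd c then 1 else 0)))"
      if c: "c \<in> {1..}" for c
    proof -
      have "gcd c d = gcd c (p ^ e) * gcd c m"
        unfolding D(1) by (rule gcd_coprime_mult) (use copi in \<open>simp add: coprime_commute\<close>)
      then have "real (gcd c d) powr t = real (gcd c (p ^ e)) powr t * real (gcd c m) powr t"
        by (simp add: powr_mult)
      also have "real (gcd c (p ^ e)) powr t = (\<Sum>i=0..e. delta_w (real p) t i * (if p ^ i dvd c then 1 else 0))"
        using p(1) c by (intro gcd_prime_power_expand) auto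
      finally show ?thesis by (simp add: sum_distrib_left sum_distrib_right algebra_simps)
    qed
    have each: "((\<lambda>c. real c powr s * real (gcd c m) powr t * (if p ^ i dvd c then 1 else 0))
                  has_sum ((real p ^ i) powr s * Gm)) {1..}" for i
    proof -
      let ?f = "\<lambda>c. real c powr s * real (gcd c m) powr t * (if p ^ i dvd c then 1 else 0)"
      have pi0: "p ^ i > 0" using p by (simp add: prime_gt_0_nat)
      have inj: "inj_on (\<lambda>c1. p ^ i * c1) {1..}" using pi0 by (auto simp: inj_on_def)
      have "((\<lambda>c1::nat. (real p ^ i) powr s * (real c1 powr s * real (gcd c1 m) powr t)) has_sum ((real p ^ i) powr s * Gm)) {1..}"
        by (rule has_sum_cmult_right[OF IH])
      moreover have "(?f \<circ> (\<lambda>c1. p ^ i * c1)) = (\<lambda>c1::nat. (real p ^ i) powr s * (real c1 powr s * real (gcd c1 m) powr t))"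
      proof (rule ext)
        fix c1
        have "gcd (p ^ i * c1) m = gcd c1 m" using copi[of i] by (rule gcd_mult_left_left_cancel)
        then show "(?f \<circ> (\<lambda>c1. p ^ i * c1)) c1 = (real p ^ i) powr s * (real c1 powr s * real (gcd c1 m) powr t)"
          by (simp add: powr_mult)
      qed
      ultimately have "((?f \<circ> (\<lambda>c1. p ^ i * c1)) has_sum ((real p ^ i) powr s * Gm)) {1..}" by simp
      then have A: "(?f has_sum ((real p ^ i) powr s * Gm)) ((\<lambda>c1. p ^ i * c1) ` {1..})"
        by (subst has_sum_reindex[OF inj])
      have sub: "(\<lambda>c1. p ^ i * c1) ` {1..} \<subseteq> {1..}" using pi0 by auto
      have "(?f has_sum ((real p ^ i) powr s * Gm)) ((\<lambda>c1. p ^ i * c1) ` {1..}) \<longleftrightarrow> (?f has_sum ((real p ^ i) powr s * Gm)) {1..}"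
      proof (rule has_sum_cong_neutral)
        fix c assume c: "c \<in> {1..} - (\<lambda>c1. p ^ i * c1) ` {1..}"
        show "?f c = 0"
        proof (cases "p ^ i dvd c")
          case True
          then obtain c1 where "c = p ^ i * c1" by auto
          moreover then have "c1 \<ge> 1" using c by (cases c1) auto
          ultimately show ?thesis using c by auto
        qed simp
      qed (use sub in auto)
      then show ?thesis using A by simp
    qed
    have "((\<lambda>c. \<Sum>i=0..e. delta_w (real p) t i * (real c powr s * real (gcd c m) powr t * (if p ^ i dvd c then 1 else 0)))
             has_sum (\<Sum>i=0..e. delta_w (real p) t i * ((real p ^ i) powr s * Gm))) {1..}"
      by (intro has_sum_sum_fun has_sum_cmult_right each) auto
    then have "((\<lambda>c::nat. real c powr s * real (gcd c d) powr t) has_sum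
                 (\<Sum>i=0..e. delta_w (real p) t i * ((real p ^ i) powr s * Gm))) {1..}"
      by (subst has_sum_cong[OF expand]) auto
    moreover have "(\<Sum>i=0..e. delta_w (real p) t i * ((real p ^ i) powr s * Gm))
        = Gm * euler_fac s t p e"
    proof -
      have "(\<Sum>i=0..e. delta_w (real p) t i * ((real p ^ i) powr s * Gm))
           = Gm * (\<Sum>i=0..e. delta_w (real p) t i * (real p ^ i) powr s)"
        by (simp add: sum_distrib_left algebra_simps)
      also have "\<dots> = Gm * euler_fac s t p e"
        unfolding euler_fac_def using p(1) by (subst delta_w_sum) (auto simp: prime_gt_0_nat)
      finally show ?thesis .
    qed
    moreover have "riemann_zeta_real (-s) * (\<Prod>q\<in>prime_factors d. euler_fac s t q (multiplicity q d))
                   = Gm * euler_fac s t p e"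
    proof -
      have "(\<Prod>q\<in>prime_factors d. euler_fac s t q (multiplicity q d))
           = euler_fac s t p (multiplicity p d) * (\<Prod>q\<in>prime_factors m. euler_fac s t q (multiplicity q d))"
        unfolding D(6) using D(7) by (simp add: prod.insert)
      also have "(\<Prod>q\<in>prime_factors m. euler_fac s t q (multiplicity q d))
               = (\<Prod>q\<in>prime_factors m. euler_fac s t q (multiplicity q m))"
        by (rule prod.cong) (use D(8) in auto)
      finally show ?thesis unfolding Gm_def e_def by (simp add: algebra_simps)
    qed
    ultimately show ?thesis by simp
  qed
qed

definition Kfun :: "nat \<Rightarrow> int \<Rightarrow> int \<Rightarrow> nat \<Rightarrow> real" where
  "Kfun d n P c = (\<Sum>\<^sub>\<infinity>b\<in>Bset c d n. real_of_int b powi P)"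

lemma Kfun_has_sum:
  assumes "0 < d" "P \<le> -2"
  shows "((\<lambda>b. real_of_int b powi P) has_sum Kfun d n P c) (Bset c d n)"
proof (cases "int (gcd c d) dvd n")
  case True
  have "bstar c d n \<in> Bset c d n" using True by (rule bstar_in)
  from K_has_sum[OF assms(1) this assms(2)] show ?thesis
    unfolding Kfun_def by (metis has_sum_infsum has_sum_imp_summable)
next
  case False
  then show ?thesis using Bset_empty[OF False] by (simp add: Kfun_def)
qed

lemma Kfun_gen:
  assumes "0 < d" "P \<le> -2" "b0 \<in> Bset c d n"
  shows "Kfun d n P c = (real d / real (gcd c d)) powi P *
      (\<Sum>\<^sub>\<infinity>m::int. (real_of_int m + real_of_int b0 / (real d / real (gcd c d))) powi P)"
  using K_has_sum[OF assms(1) assms(3) assms(2)] Kfun_has_sum[OF assms(1,2)] has_sum_unique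
  unfolding q_real by metis

lemma main_dvd:
  assumes d0: "0 < d" and P2: "P \<le> -2" and s2: "r2 + real_of_int P \<le> -2" and dn: "int d dvd n"
  shows "((\<lambda>c. real c powr (r2 + real_of_int P) * Kfun d n P c) has_sum
     (2 * real d powi P * (if even P then 1 else 0) *
           riemann_zeta_real (real_of_int (- P)) * riemann_zeta_real (- r2 - real_of_int P) *
           (\<Prod>p\<in>prime_factors d.
              1 + (1 - real p powi P) * (\<Sum>k=1..multiplicity p d. real p powr (real k * r2))))) {1..}"
proof -
  define s where "s = r2 + real_of_int P"
  define Z2 where "Z2 = 2 * (if even P then 1 else 0) * riemann_zeta_real (real_of_int (- P))"
  have H0: "(\<Sum>\<^sub>\<infinity>m::int. real_of_int m powi P) = Z2"
    unfolding Z2_def using H0_has_sum[OF P2] by (rule infsumI)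
  have K: "Kfun d n P c = real d powi P * Z2 * real (gcd c d) powr (- real_of_int P)" for c
  proof -
    have "0 \<in> Bset c d n" using dn by (simp add: Bset_iff)
    from Kfun_gen[OF d0 P2 this] have "Kfun d n P c = (real d / real (gcd c d)) powi P * Z2"
      using H0 by simp
    also have "(real d / real (gcd c d)) powi P = real d powi P * real (gcd c d) powr (- real_of_int P)"
    proof -
      have g0: "real (gcd c d) > 0" using d0 by simp
      have "real (gcd c d) powr (- real_of_int P) = inverse (real (gcd c d) powi P)"
        using g0 by (simp add: powr_minus powr_real_of_int')
      then show ?thesis by (simp add: divide_inverse power_int_mult_distrib power_int_inverse)
    qed
    finally show ?thesis by (simp add: algebra_simps)
  qed
  have G: "((\<lambda>c::nat. real c powr s * real (gcd c d) powr (- real_of_int P)) has_sum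
     (riemann_zeta_real (-s) * (\<Prod>p\<in>prime_factors d. euler_fac s (- real_of_int P) p (multiplicity p d)))) {1..}"
    using s2 d0 unfolding s_def by (intro gcd_series) auto
  have "((\<lambda>c::nat. (real d powi P * Z2) * (real c powr s * real (gcd c d) powr (- real_of_int P))) has_sum
     ((real d powi P * Z2) * (riemann_zeta_real (-s) * (\<Prod>p\<in>prime_factors d. euler_fac s (- real_of_int P) p (multiplicity p d))))) {1..}"
    by (rule has_sum_cmult_right[OF G])
  moreover have "euler_fac s (- real_of_int P) p e = 1 + (1 - real p powi P) * (\<Sum>k=1..e. real p powr (real k * r2))"
    if "p \<in> prime_factors d" for p e
  proof -
    have "prime p" using that by auto
    then have "real p > 0" by (simp add: prime_gt_0_nat)
    then have "real p powr (- (- real_of_int P)) = real p powi P" by (simp add: powr_real_of_int')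
    then show ?thesis unfolding euler_fac_def s_def by simp
  qed
  then have prodeq: "(\<Prod>p\<in>prime_factors d. euler_fac s (- real_of_int P) p (multiplicity p d))
      = (\<Prod>p\<in>prime_factors d. 1 + (1 - real p powi P) * (\<Sum>k=1..multiplicity p d. real p powr (real k * r2)))"
    by (intro prod.cong) auto
  have zeq: "riemann_zeta_real (-s) = riemann_zeta_real (- r2 - real_of_int P)"
    unfolding s_def by (rule arg_cong[where f=riemann_zeta_real]) simp
  have feq: "(\<lambda>c::nat. (real d powi P * Z2) * (real c powr s * real (gcd c d) powr (- real_of_int P)))
      = (\<lambda>c. real c powr (r2 + real_of_int P) * Kfun d n P c)"
    unfolding K s_def by (rule ext) (simp add: algebra_simps)
  ultimately show ?thesis unfolding prodeq zeq feq Z2_def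
    by (simp add: algebra_simps)
qed


lemma main_ndvd:
  assumes d0: "0 < d" and P2: "P \<le> -2" and s2: "r2 + real_of_int P \<le> -2"
  shows "((\<lambda>c. real c powr (r2 + real_of_int P) * Kfun d n P c) has_sum
     (real d powr (r2 + 2 * real_of_int P) *
           (\<Sum>c'\<in>{c'. 0 < c' \<and> c' \<le> d \<and> int (gcd c' d) dvd n}.
              hurwitz_zeta_real (- r2 - real_of_int P) (real c' / real d) /
                real (gcd c' d) powi P *
              (\<Sum>\<^sub>\<infinity>m::int. (real_of_int m + u_cd c' d n) powi P)))) {1..}"
proof -
  define s where "s = r2 + real_of_int P"
  have per: "Kfun d n P c = Kfun d n P c'" if "c mod d = c' mod d" for c c'
    unfolding Kfun_def using Bset_mod[OF that] by simp
  have V: "((\<lambda>c. real c powr s * Kfun d n P c) has_sum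
      (\<Sum>c'\<in>{1..d}. Kfun d n P c' * (real d powr s * hurwitz_zeta_real (-s) (real c' / real d)))) {1..}"
    using s2 unfolding s_def by (intro periodic_has_sum d0 per) auto
  define T where "T = (\<lambda>c'. hurwitz_zeta_real (- r2 - real_of_int P) (real c' / real d) /
                real (gcd c' d) powi P *
              (\<Sum>\<^sub>\<infinity>m::int. (real_of_int m + u_cd c' d n) powi P))"
  have termeq: "Kfun d n P c' * (real d powr s * hurwitz_zeta_real (-s) (real c' / real d))
      = (if int (gcd c' d) dvd n then real d powr (r2 + 2 * real_of_int P) * T c' else 0)" for c'
  proof (cases "int (gcd c' d) dvd n")
    case True
    have bin: "bstar c' d n \<in> Bset c' d n" using True by (rule bstar_in)
    have g0: "real (gcd c' d) > 0" using d0 by simp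
    have u: "real_of_int (bstar c' d n) / (real d / real (gcd c' d)) = u_cd c' d n"
      unfolding u_cd_def using g0 d0 by (simp add: field_simps)
    have K: "Kfun d n P c' = real d powi P / real (gcd c' d) powi P *
       (\<Sum>\<^sub>\<infinity>m::int. (real_of_int m + u_cd c' d n) powi P)"
      using Kfun_gen[OF d0 P2 bin] unfolding u by (simp add: power_int_divide_distrib)
    have dd: "real d powr s * real d powi P = real d powr (r2 + 2 * real_of_int P)"
    proof -
      have "real d powi P = real d powr real_of_int P" using d0 by (simp add: powr_real_of_int')
      then show ?thesis unfolding s_def by (simp add: powr_add[symmetric] algebra_simps)
    qed
    have zs: "hurwitz_zeta_real (-s) (real c' / real d) = hurwitz_zeta_real (- r2 - real_of_int P) (real c' / real d)"
      unfolding s_def by (rule arg_cong[where f="\<lambda>x. hurwitz_zeta_real x (real c' / real d)"]) simp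
    show ?thesis using True unfolding K T_def zs dd[symmetric]
      by (simp add: algebra_simps)
  next
    case False
    then show ?thesis unfolding Kfun_def using Bset_empty[OF False] by simp
  qed
  have set: "{c'. 0 < c' \<and> c' \<le> d \<and> int (gcd c' d) dvd n} = {c' \<in> {1..d}. int (gcd c' d) dvd n}"
    by auto
  have "(\<Sum>c'\<in>{1..d}. Kfun d n P c' * (real d powr s * hurwitz_zeta_real (-s) (real c' / real d)))
      = real d powr (r2 + 2 * real_of_int P) * (\<Sum>c'\<in>{c'. 0 < c' \<and> c' \<le> d \<and> int (gcd c' d) dvd n}. T c')"
  proof -
    have "(\<Sum>c'\<in>{1..d}. Kfun d n P c' * (real d powr s * hurwitz_zeta_real (-s) (real c' / real d)))
       = (\<Sum>c'\<in>{1..d}. if int (gcd c' d) dvd n then real d powr (r2 + 2 * real_of_int P) * T c' else 0)"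
      unfolding termeq ..
    also have "\<dots> = (\<Sum>c'\<in>{c' \<in> {1..d}. int (gcd c' d) dvd n}. real d powr (r2 + 2 * real_of_int P) * T c')"
      by (rule sum.inter_filter[symmetric]) simp
    also have "\<dots> = real d powr (r2 + 2 * real_of_int P) * (\<Sum>c'\<in>{c'. 0 < c' \<and> c' \<le> d \<and> int (gcd c' d) dvd n}. T c')"
      unfolding set by (simp add: sum_distrib_left)
    finally show ?thesis .
  qed
  then show ?thesis using V unfolding s_def T_def by simp
qed

lemma sign_lemma:
  fixes x :: real
  shows "- ((- x) powi P) = (-1::real) powi (P + 1) * x powi P"
proof (cases "even P")
  case True
  then have "odd (P + 1)" by simp
  then have "(-1::real) powi (P + 1) = -1" by (simp add: power_int_minus_left_odd)
  then show ?thesis using True by simp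
next
  case False
  then have "even (P + 1)" by simp
  then have "(-1::real) powi (P + 1) = 1" by (simp add: power_int_minus_left_even)
  then show ?thesis using False by simp
qed

theorem lemma3p1:
  fixes r2 :: real
  shows "\<exists>P0::int. \<forall>(n::int) (d::nat) (P::int). n \<noteq> 0 \<longrightarrow> 0 < d \<longrightarrow> P \<le> P0 \<longrightarrow>
     (\<forall>c::nat. 0 < c \<longrightarrow>
        (\<lambda>(a, b). real_of_int (b * int c) powi P) summable_on inner_pairs c d n) \<and>
     ((\<lambda>c::nat. real c powr r2 *
         (\<Sum>\<^sub>\<infinity>(a, b)\<in>inner_pairs c d n. real_of_int (b * int c) powi P))
      has_sum
       ((-1::real) powi (P + 1) * real_of_int n powi P * divisor_sigma r2 n +
        (if int d dvd n then
           2 * real d powi P * (if even P then 1 else 0) *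
           riemann_zeta_real (real_of_int (- P)) * riemann_zeta_real (- r2 - real_of_int P) *
           (\<Prod>p\<in>prime_factors d.
              1 + (1 - real p powi P) * (\<Sum>k=1..multiplicity p d. real p powr (real k * r2)))
         else
           real d powr (r2 + 2 * real_of_int P) *
           (\<Sum>c'\<in>{c'. 0 < c' \<and> c' \<le> d \<and> int (gcd c' d) dvd n}.
              hurwitz_zeta_real (- r2 - real_of_int P) (real c' / real d) /
                real (gcd c' d) powi P *
              (\<Sum>\<^sub>\<infinity>m::int. (real_of_int m + u_cd c' d n) powi P))))
      ) {1..}"
proof -
  define P0 :: int where "P0 = min (-2) (-2 - \<lceil>r2\<rceil>)"
  show ?thesis
  proof (rule exI[of _ P0], intro allI impI, rule conjI)
    fix n :: int and d :: nat and P :: int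
    assume n0: "n \<noteq> 0" and d0: "0 < d" and PP: "P \<le> P0"
    have P2: "P \<le> -2" using PP by (simp add: P0_def)
    have "P \<le> -2 - \<lceil>r2\<rceil>" using PP by (simp add: P0_def)
    then have "real_of_int P \<le> -2 - real_of_int \<lceil>r2\<rceil>" by linarith
    moreover have "r2 \<le> real_of_int \<lceil>r2\<rceil>" by (rule le_of_int_ceiling)
    ultimately have s2: "r2 + real_of_int P \<le> -2" by linarith
    define z where "z = (\<lambda>c::nat. if int c dvd n then real_of_int (- n) powi P else 0)"
    have inner: "((\<lambda>(a, b). real_of_int (b * int c) powi P) has_sum
       (real c powi P * Kfun d n P c - z c)) (inner_pairs c d n)" if "0 < c" for c
      unfolding z_def using P2 by (intro inner_has_sum that d0 Kfun_has_sum) auto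
    show "(\<forall>c::nat. 0 < c \<longrightarrow>
        (\<lambda>(a, b). real_of_int (b * int c) powi P) summable_on inner_pairs c d n)"
      using inner has_sum_imp_summable by blast
    define T where "T = (if int d dvd n then
           2 * real d powi P * (if even P then 1 else 0) *
           riemann_zeta_real (real_of_int (- P)) * riemann_zeta_real (- r2 - real_of_int P) *
           (\<Prod>p\<in>prime_factors d.
              1 + (1 - real p powi P) * (\<Sum>k=1..multiplicity p d. real p powr (real k * r2)))
         else
           real d powr (r2 + 2 * real_of_int P) *
           (\<Sum>c'\<in>{c'. 0 < c' \<and> c' \<le> d \<and> int (gcd c' d) dvd n}.
              hurwitz_zeta_real (- r2 - real_of_int P) (real c' / real d) /
                real (gcd c' d) powi P *
              (\<Sum>\<^sub>\<infinity>m::int. (real_of_int m + u_cd c' d n) powi P)))"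
    have A: "((\<lambda>c. real c powr (r2 + real_of_int P) * Kfun d n P c) has_sum T) {1..}"
      unfolding T_def using main_dvd[OF d0 P2 s2] main_ndvd[OF d0 P2 s2] by auto
    define D where "D = {e::nat. 0 < e \<and> int e dvd n}"
    have finD: "finite D"
    proof (rule finite_subset[of _ "{..nat \<bar>n\<bar>}"])
      show "D \<subseteq> {..nat \<bar>n\<bar>}"
      proof
        fix e assume "e \<in> D"
        then have "int e dvd n" by (simp add: D_def)
        then have "int e dvd \<bar>n\<bar>" by simp
        then have "int e \<le> \<bar>n\<bar>" using n0 by (intro zdvd_imp_le) auto
        then show "e \<in> {..nat \<bar>n\<bar>}" by simp
      qed
    qed simp
    have B: "((\<lambda>c::nat. real c powr r2 * z c) has_sum (real_of_int (- n) powi P * divisor_sigma r2 n)) {1..}"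
    proof (rule has_sum_finite_neutralI[OF finD])
      show "D \<subseteq> {1..}" by (auto simp: D_def)
      show "real c powr r2 * z c = 0" if "c \<in> {1..} - D" for c
        using that by (auto simp: D_def z_def)
      show "real_of_int (- n) powi P * divisor_sigma r2 n = (\<Sum>c\<in>D. real c powr r2 * z c)"
      proof -
        have "(\<Sum>c\<in>D. real c powr r2 * z c) = (\<Sum>c\<in>D. real_of_int (- n) powi P * real c powr r2)"
          by (rule sum.cong) (auto simp: D_def z_def)
        then show ?thesis unfolding divisor_sigma_def D_def[symmetric] by (simp add: sum_distrib_left)
      qed
    qed
    have "((\<lambda>c. real c powr (r2 + real_of_int P) * Kfun d n P c + - (real c powr r2 * z c)) has_sum
           (T + - (real_of_int (- n) powi P * divisor_sigma r2 n))) {1..}"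
      by (intro has_sum_add A has_sum_uminusI B)
    note H1 = this
    have EQ:  "real c powr (r2 + real_of_int P) * Kfun d n P c + - (real c powr r2 * z c)
        = real c powr r2 * (\<Sum>\<^sub>\<infinity>(a, b)\<in>inner_pairs c d n. real_of_int (b * int c) powi P)"
      if "c \<in> {1..}" for c
    proof -
      have c0: "0 < c" using that by simp
      have I: "(\<Sum>\<^sub>\<infinity>(a, b)\<in>inner_pairs c d n. real_of_int (b * int c) powi P) = real c powi P * Kfun d n P c - z c"
        using inner[OF c0] by (rule infsumI)
      have E: "real c powr r2 * real c powi P = real c powr (r2 + real_of_int P)"
        using c0 by (simp add: powr_add powr_real_of_int')
      have "real c powr r2 * (real c powi P * Kfun d n P c - z c)
          = (real c powr r2 * real c powi P) * Kfun d n P c - real c powr r2 * z c"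
        by (simp add: algebra_simps)
      then show ?thesis unfolding I E by simp
    qed
    have V: "T + - (real_of_int (- n) powi P * divisor_sigma r2 n)
        = (-1::real) powi (P + 1) * real_of_int n powi P * divisor_sigma r2 n + T"
    proof -
      have "- (real_of_int (- n) powi P * divisor_sigma r2 n) = (- (real_of_int (- n) powi P)) * divisor_sigma r2 n"
        by simp
      also have "- (real_of_int (- n) powi P) = (-1::real) powi (P + 1) * real_of_int n powi P"
        using sign_lemma[of "real_of_int n" P] by simp
      finally show ?thesis by (simp only: add.commute)
    qed
    have H2: "((\<lambda>c::nat. real c powr r2 *
         (\<Sum>\<^sub>\<infinity>(a, b)\<in>inner_pairs c d n. real_of_int (b * int c) powi P))
      has_sum (T + - (real_of_int (- n) powi P * divisor_sigma r2 n))) {1..}"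
    proof -
      have "((\<lambda>c. real c powr (r2 + real_of_int P) * Kfun d n P c + - (real c powr r2 * z c)) has_sum
           (T + - (real_of_int (- n) powi P * divisor_sigma r2 n))) {1..} \<longleftrightarrow>
            ((\<lambda>c::nat. real c powr r2 *
         (\<Sum>\<^sub>\<infinity>(a, b)\<in>inner_pairs c d n. real_of_int (b * int c) powi P))
      has_sum (T + - (real_of_int (- n) powi P * divisor_sigma r2 n))) {1..}"
        by (rule has_sum_cong) (rule EQ)
      then show ?thesis using H1 by (rule iffD1)
    qed
    show "((\<lambda>c::nat. real c powr r2 *
         (\<Sum>\<^sub>\<infinity>(a, b)\<in>inner_pairs c d n. real_of_int (b * int c) powi P))
      has_sum ((-1::real) powi (P + 1) * real_of_int n powi P * divisor_sigma r2 n + T)) {1..}"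
      using H2 unfolding V .
  qed
qed


end
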